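(* Let $a_1,\ldots,a_k\in[n]$, $N=a_1+\cdots+a_k$, let $j\in[\max(a_1,\ldots,a_k),\min(N,n)]$ and let $t$ be any term of $B_j$. Let $D_{j,t}$ be the set of $k$-tuples $(\sigma_1,\ldots,\sigma_k)$, with $\sigma_i$ a term of $B_{a_i}$, such that the set of cards hit by the tuple is exactly $\{1,\ldots,j\}$ and $\sigma_1\sigma_2\cdots\sigma_k=t$ in $S_n$. Define $\phi_j(\sigma_1,\ldots,\sigma_k)=\{\alpha_1,\ldots,\alpha_j\}$ where $\alpha_c=\{l\in[N]:\text{the $l$-th hitter hits card } c\}$. Then $\phi_j$ is a well-defined bijection from $D_{j,t}$ onto $Q_j^{a_1,\ldots,a_k}$.
   Context: Elements of $S_n$ are written in deck notation: a word $c_1c_2\cdots c_n$ (a rearrangement of $1,\ldots,n$) is the deck in which card $c_i$ lies in position $i$; the identity is $12\cdots n$. Multiplication: for $\sigma=c_1\cdots c_n$ and $\tau=d_1\cdots d_n$, $\sigma\tau=c_{d_1}c_{d_2}\cdots c_{d_n}$ (first $\sigma$, then $\tau$ is applied to the deck). For $a\in[n]$, a term of $B_a$ is a word $c_1\cdots c_n\in S_n$ in which the letters $a+1,\ldots,n$ appear in increasing order; $B_a\in\mathbb{Q}[S_n]$ is the sum of all terms of $B_a$. Let $A_i=a_1+\cdots+a_i$ ($A_0=0$) and $I_i=\{A_{i-1}+1,\ldots,A_i\}$. Hitting: given a tuple $(\sigma_1,\ldots,\sigma_k)$ with $\sigma_i$ a term of $B_{a_i}$, let $d^{(0)}=12\cdots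 n$ and $d^{(i)}=\sigma_1\cdots\sigma_i$ (the deck after $i$ shuffles). For $l=A_{i-1}+m$ with $1\le m\le a_i$, the $l$-th hitter hits the card lying in position $m$ of $d^{(i-1)}$. The cards hit by the tuple are those hit by some hitter. $Q_j^{a_1,\ldots,a_k}$ is the set of all partitions of $[N]$ into exactly $j$ nonempty blocks such that no block contains two distinct elements of the same segment $I_i$. *)

theory Defs
  imports "HOL-Combinatorics.Permutations" "HOL-Library.Disjoint_Sets"
begin

(* Decks in S_n are functions sigma :: nat => nat with "sigma permutes {1..n}";
   sigma p is the card lying in position p.  Deck multiplication sigma*tau
   (first sigma, then tau) is function composition sigma o tau. *)

definition termB :: "nat \<Rightarrow> nat \<Rightarrow> (nat \<Rightarrow> nat) \<Rightarrow> bool" where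
  "termB n a \<sigma> \<longleftrightarrow> \<sigma> permutes {1..n} \<and>
     (\<forall>p\<in>{1..n}. \<forall>q\<in>{1..n}. p < q \<and> a < \<sigma> p \<and> a < \<sigma> q \<longrightarrow> \<sigma> p < \<sigma> q)"

definition Apart :: "(nat \<Rightarrow> nat) \<Rightarrow> nat \<Rightarrow> nat" where
  "Apart a i = (\<Sum>r\<in>{1..i}. a r)"

definition seg :: "(nat \<Rightarrow> nat) \<Rightarrow> nat \<Rightarrow> nat set" where
  "seg a i = {Apart a (i - 1) + 1 .. Apart a i}"

fun deck :: "(nat \<Rightarrow> (nat \<Rightarrow> nat)) \<Rightarrow> nat \<Rightarrow> (nat \<Rightarrow> nat)" where
  "deck sig 0 = id"
| "deck sig (Suc i) = deck sig i \<circ> sig (Suc i)"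

definition hits :: "nat \<Rightarrow> (nat \<Rightarrow> nat) \<Rightarrow> (nat \<Rightarrow> (nat \<Rightarrow> nat)) \<Rightarrow> nat \<Rightarrow> nat \<Rightarrow> bool" where
  "hits k a sig l c \<longleftrightarrow>
     (\<exists>i\<in>{1..k}. \<exists>m\<in>{1..a i}. l = Apart a (i - 1) + m \<and> deck sig (i - 1) m = c)"

definition cards_hit :: "nat \<Rightarrow> (nat \<Rightarrow> nat) \<Rightarrow> (nat \<Rightarrow> (nat \<Rightarrow> nat)) \<Rightarrow> nat set" where
  "cards_hit k a sig = {c. \<exists>l\<in>{1..Apart a k}. hits k a sig l c}"

(* D_{j,t}: tuples (sigma_1,...,sigma_k), represented as functions on {1..k}
   (identity outside {1..k}) *)
definition Dset :: "nat \<Rightarrow> nat \<Rightarrow> (nat \<Rightarrow> nat) \<Rightarrow> nat \<Rightarrow> (nat \<Rightarrow> nat) \<Rightarrow> (nat \<Rightarrow> (nat \<Rightarrow> nat)) set" where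
  "Dset n k a j t = {sig. (\<forall>i\<in>{1..k}. termB n (a i) (sig i)) \<and>
                          (\<forall>i. i \<notin> {1..k} \<longrightarrow> sig i = id) \<and>
                          cards_hit k a sig = {1..j} \<and>
                          deck sig k = t}"

definition phi :: "nat \<Rightarrow> (nat \<Rightarrow> nat) \<Rightarrow> nat \<Rightarrow> (nat \<Rightarrow> (nat \<Rightarrow> nat)) \<Rightarrow> nat set set" where
  "phi k a j sig = (\<lambda>c. {l\<in>{1..Apart a k}. hits k a sig l c}) ` {1..j}"

definition Qset :: "nat \<Rightarrow> (nat \<Rightarrow> nat) \<Rightarrow> nat \<Rightarrow> nat set set set" where
  "Qset k a j = {P. partition_on {1..Apart a k} P \<and> card P = j \<and>
                    (\<forall>B\<in>P. \<forall>i\<in>{1..k}. \<forall>x\<in>B. \<forall>y\<in>B. x \<in> seg a i \<and> y \<in> seg a i \<longrightarrow> x = y)}"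

end

theory Submission
  imports Defs
begin

lemma rank_card_le:
  fixes S :: "'a::linorder set"
  assumes "finite S" "s \<in> S"
  shows "card {x\<in>S. x \<le> s} \<in> {1..card S}"
proof -
  have "{x\<in>S. x \<le> s} \<noteq> {}" using assms by auto
  hence "card {x\<in>S. x \<le> s} \<ge> 1" using assms by (simp add: Suc_leI card_gt_0_iff)
  moreover have "card {x\<in>S. x \<le> s} \<le> card S" using assms by (intro card_mono) auto
  ultimately show ?thesis by auto
qed

lemma rank_mono:
  fixes S :: "'a::linorder set"
  assumes "finite S" "s \<in> S" "s' \<in> S" "s < s'"
  shows "card {x\<in>S. x \<le> s} < card {x\<in>S. x \<le> s'}"
proof -
  have "{x\<in>S. x \<le> s} \<subseteq> {x\<in>S. x \<le> s'}" using assms by auto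
  moreover have "s' \<notin> {x\<in>S. x \<le> s}" using assms by auto
  ultimately have "{x\<in>S. x \<le> s} \<subset> {x\<in>S. x \<le> s'}" using assms by blast
  thus ?thesis using assms by (intro psubset_card_mono) auto
qed

lemma rank_bij:
  fixes S :: "'a::linorder set"
  assumes "finite S"
  shows "bij_betw (\<lambda>s. card {x\<in>S. x \<le> s}) S {1..card S}"
proof -
  let ?r = "\<lambda>s. card {x\<in>S. x \<le> s}"
  have inj: "inj_on ?r S"
  proof (rule inj_onI)
    fix s s' assume "s \<in> S" "s' \<in> S" "?r s = ?r s'"
    thus "s = s'" using rank_mono[OF assms, of s s'] rank_mono[OF assms, of s' s]
      by (metis less_irrefl linorder_neqE)
  qed
  moreover have "?r ` S \<subseteq> {1..card S}" using rank_card_le[OF assms] by auto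
  moreover have "card (?r ` S) = card {1..card S}" using inj by (simp add: card_image)
  ultimately have "?r ` S = {1..card S}" by (intro card_subset_eq) auto
  with inj show ?thesis by (simp add: bij_betw_def)
qed

lemma bij_rank:
  assumes "bij_betw f {1..(n::nat)} {1..n}" "x \<in> {1..n}"
  shows "f x = card {y\<in>{1..n}. f y \<le> f x}"
proof -
  have "f ` {y\<in>{1..n}. f y \<le> f x} = {z\<in>{1..n}. z \<le> f x}"
  proof
    show "f ` {y\<in>{1..n}. f y \<le> f x} \<subseteq> {z\<in>{1..n}. z \<le> f x}"
      using assms(1) unfolding bij_betw_def by auto
    show "{z\<in>{1..n}. z \<le> f x} \<subseteq> f ` {y\<in>{1..n}. f y \<le> f x}"
    proof
      fix z assume z: "z \<in> {z\<in>{1..n}. z \<le> f x}"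
      then obtain y where "y \<in> {1..n}" "f y = z" using assms(1) unfolding bij_betw_def
        by (metis (no_types, lifting) imageE mem_Collect_eq)
      thus "z \<in> f ` {y\<in>{1..n}. f y \<le> f x}" using z by auto
    qed
  qed
  moreover have "inj_on f {y\<in>{1..n}. f y \<le> f x}"
    using assms(1) unfolding bij_betw_def by (auto intro: inj_on_subset)
  ultimately have cc: "card {y\<in>{1..n}. f y \<le> f x} = card {z\<in>{1..n}. z \<le> f x}"
    by (metis card_image)
  have "f x \<in> {1..n}" using assms unfolding bij_betw_def by auto
  hence "{z\<in>{1..n}. z \<le> f x} = {1..f x}" by auto
  thus ?thesis using cc by simp
qed

lemma Apart_0[simp]: "Apart a 0 = 0" by (simp add: Apart_def)
lemma Apart_Suc: "Apart a (Suc i) = Apart a i + a (Suc i)"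
  by (simp add: Apart_def add.commute)
lemma Apart_mono: "i \<le> i' \<Longrightarrow> Apart a i \<le> Apart a i'"
  unfolding Apart_def by (intro sum_mono2) auto

lemma decomp_unique:
  assumes "Apart a (i - 1) + m = Apart a (i' - 1) + m'" "i \<ge> 1" "i' \<ge> 1"
    "m \<in> {1..a i}" "m' \<in> {1..a i'}"
  shows "i = i' \<and> m = m'"
proof -
  have X: False if "i < i'" "Apart a (i - 1) + m = Apart a (i' - 1) + m'" "i \<ge> 1" "i' \<ge> 1"
    "m \<in> {1..a i}" "m' \<in> {1..a i'}" for i i' m m'
  proof -
    have "Apart a (i - 1) + m \<le> Apart a i" using that Apart_Suc[of a "i-1"] by auto
    also have "\<dots> \<le> Apart a (i' - 1)" using that by (intro Apart_mono) auto
    also have "\<dots> < Apart a (i' - 1) + m'" using that by auto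
    finally show False using that by simp
  qed
  have "i = i'" using X[of i i' m m'] X[of i' i m' m] assms by (metis linorder_neqE)
  thus ?thesis using assms by simp
qed

lemma decomp_exists:
  assumes "l \<in> {1..Apart a k}"
  shows "\<exists>i\<in>{1..k}. \<exists>m\<in>{1..a i}. l = Apart a (i - 1) + m"
  using assms
proof (induction k)
  case 0 thus ?case by simp
next
  case (Suc k)
  show ?case
  proof (cases "l \<le> Apart a k")
    case True thus ?thesis using Suc by fastforce
  next
    case False
    thus ?thesis using Suc.prems Apart_Suc[of a k]
      by (intro bexI[of _ "Suc k"] bexI[of _ "l - Apart a k"]) auto
  qed
qed

lemma hits_range: "hits k a sig l c \<Longrightarrow> l \<in> {1..Apart a k}"
proof -
  assume "hits k a sig l c"
  then obtain i m where im: "i\<in>{1..k}" "m\<in>{1..a i}" "l = Apart a (i - 1) + m"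
    unfolding hits_def by auto
  have "Apart a (i - 1) + m \<le> Apart a i" using im Apart_Suc[of a "i-1"] by auto
  also have "\<dots> \<le> Apart a k" using im by (intro Apart_mono) auto
  finally show ?thesis using im by auto
qed

lemma hits_seg:
  assumes "i \<in> {1..k}" "m \<in> {1..a i}"
  shows "hits k a sig (Apart a (i - 1) + m) c \<longleftrightarrow> deck sig (i - 1) m = c"
proof
  assume "hits k a sig (Apart a (i - 1) + m) c"
  then obtain i' m' where im: "i'\<in>{1..k}" "m'\<in>{1..a i'}" "Apart a (i - 1) + m = Apart a (i' - 1) + m'"
     "deck sig (i' - 1) m' = c"
    unfolding hits_def by auto
  from decomp_unique[OF im(3)] im assms show "deck sig (i - 1) m = c" by auto
next
  assume "deck sig (i - 1) m = c" thus "hits k a sig (Apart a (i - 1) + m) c"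
    using assms unfolding hits_def by blast
qed


definition keyf :: "(nat \<Rightarrow> nat \<Rightarrow> bool) \<Rightarrow> nat \<Rightarrow> (nat \<Rightarrow> nat) \<Rightarrow> nat \<Rightarrow> nat \<Rightarrow> nat" where
  "keyf R N t A c = (if \<exists>l. A < l \<and> R l c then LEAST l. A < l \<and> R l c else N + inv t c)"

lemma K_hit:
  assumes "R l c" "A < l"
  shows "keyf R N t A c \<le> l \<and> A < keyf R N t A c \<and> R (keyf R N t A c) c"
proof -
  have e: "\<exists>l. A < l \<and> R l c" using assms by auto
  have "A < (LEAST l. A < l \<and> R l c) \<and> R (LEAST l. A < l \<and> R l c) c"
    by (rule LeastI_ex[OF e])
  moreover have "(LEAST l. A < l \<and> R l c) \<le> l" using assms by (intro Least_le) auto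
  ultimately show ?thesis using e by (simp add: keyf_def)
qed

lemma K_exact:
  assumes "R l c" "A < l" "\<And>l'. A < l' \<Longrightarrow> l' < l \<Longrightarrow> \<not> R l' c"
  shows "keyf R N t A c = l"
proof -
  from K_hit[of R l c A N t, OF assms(1,2)] have "keyf R N t A c \<le> l" "A < keyf R N t A c" "R (keyf R N t A c) c"
    by auto
  thus ?thesis using assms(3) by (metis le_neq_implies_less)
qed

lemma K_gt:
  assumes "t permutes {1..n}" "c \<in> {1..n}" "A \<le> N"
  shows "A < keyf R N t A c"
proof (cases "\<exists>l. A < l \<and> R l c")
  case True thus ?thesis using K_hit by blast
next
  case False
  have "inv t c \<in> {1..n}" using assms permutes_inv permutes_in_image by fastforce
  hence "keyf R N t A c = N + inv t c" using False unfolding keyf_def by (intro if_not_P) 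
  thus ?thesis using False assms \<open>inv t c \<in> {1..n}\<close> by simp
qed

lemma K_nohit:
  assumes "\<not>(\<exists>l. A < l \<and> R l c)"
  shows "keyf R N t A c = N + inv t c"
  unfolding keyf_def using assms by (rule if_not_P)

lemma K_inj:
  assumes RN: "\<And>l c. R l c \<Longrightarrow> l \<le> N" and Rf: "\<And>l c c'. R l c \<Longrightarrow> R l c' \<Longrightarrow> c = c'"
    and t: "t permutes {1..n}" and xy: "x \<in> {1..n}" "y \<in> {1..n}"
    and eq: "keyf R N t A x = keyf R N t A y"
  shows "x = y"
proof -
  have tx: "inv t x \<in> {1..n}" "inv t y \<in> {1..n}" using xy t permutes_inv permutes_in_image by fastforce+
  consider "\<exists>l. A < l \<and> R l x" "\<exists>l. A < l \<and> R l y" | "\<exists>l. A < l \<and> R l x" "\<not>(\<exists>l. A < l \<and> R l y)"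
    | "\<not>(\<exists>l. A < l \<and> R l x)" "\<exists>l. A < l \<and> R l y" | "\<not>(\<exists>l. A < l \<and> R l x)" "\<not>(\<exists>l. A < l \<and> R l y)"
    by blast
  thus ?thesis
  proof cases
    case 1 thus ?thesis using K_hit[of R _ x A N t] K_hit[of R _ y A N t] eq Rf by metis
  next
    case 2
    then obtain l where "A < l" "R l x" by auto
    from K_hit[of R l x A N t, OF this(2,1)] have "keyf R N t A x \<le> N" using RN by blast
    thus ?thesis using eq K_nohit[where A=A and R=R and c=y and N=N and t=t, OF 2(2)] tx by auto
  next
    case 3
    then obtain l where "A < l" "R l y" by auto
    from K_hit[of R l y A N t, OF this(2,1)] have "keyf R N t A y \<le> N" using RN by blast
    thus ?thesis using eq K_nohit[where A=A and R=R and c=x and N=N and t=t, OF 3(1)] tx by auto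
  next
    case 4
    hence "inv t x = inv t y" using eq K_nohit[where A=A and R=R and c=x and N=N and t=t]
      K_nohit[where A=A and R=R and c=y and N=N and t=t] by simp
    thus ?thesis by (metis t permutes_inverses(1))
  qed
qed

lemma K_skip:
  assumes "A \<le> A'" "\<And>l. A < l \<Longrightarrow> l \<le> A' \<Longrightarrow> \<not> R l c"
  shows "keyf R N t A c = keyf R N t A' c"
proof -
  have "(\<lambda>l. A < l \<and> R l c) = (\<lambda>l. A' < l \<and> R l c)"
    using assms by (auto simp: fun_eq_iff) (meson not_le)
  thus ?thesis unfolding keyf_def by metis
qed

lemma enum_rank:
  assumes mono: "\<forall>x\<in>{1..j}. \<forall>y\<in>{1..j}. x < y \<longrightarrow> f x < (f y::nat)" and c: "c \<in> {1..(j::nat)}"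
  shows "card {x \<in> f ` {1..j}. x \<le> f c} = c"
proof -
  have "{x \<in> f ` {1..j}. x \<le> f c} = f ` {1..c}"
  proof
    show "{x \<in> f ` {1..j}. x \<le> f c} \<subseteq> f ` {1..c}"
    proof
      fix x assume "x \<in> {x \<in> f ` {1..j}. x \<le> f c}"
      then obtain d where d: "d \<in> {1..j}" "x = f d" "f d \<le> f c" by auto
      hence "d \<le> c" using mono c by (meson leD linorder_le_less_linear)
      thus "x \<in> f ` {1..c}" using d by auto
    qed
    show "f ` {1..c} \<subseteq> {x \<in> f ` {1..j}. x \<le> f c}"
      using mono c by (auto simp: le_less)
  qed
  moreover have "inj_on f {1..c}"
    using mono c by (intro inj_onI) (metis atLeastAtMost_iff le_trans linorder_neqE_nat less_irrefl)
  ultimately show ?thesis by (simp add: card_image)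
qed

lemma enum_unique:
  assumes "\<forall>x\<in>{1..j}. \<forall>y\<in>{1..j}. x < y \<longrightarrow> f x < (f y::nat)"
    "\<forall>x\<in>{1..j}. \<forall>y\<in>{1..j}. x < y \<longrightarrow> g x < (g y::nat)"
    "f ` {1..j} = g ` {1..(j::nat)}" "c \<in> {1..j}"
  shows "f c = g c"
proof -
  obtain d where d: "d \<in> {1..j}" "f c = g d" using assms(3,4) by (metis imageE imageI)
  have "c = card {x \<in> f ` {1..j}. x \<le> f c}" using enum_rank[OF assms(1,4)] by simp
  also have "\<dots> = card {x \<in> g ` {1..j}. x \<le> g d}" using assms(3) d by simp
  also have "\<dots> = d" using enum_rank[OF assms(2) d(1)] .
  finally show ?thesis using d by simp
qed

lemma deck_perm:
  assumes "\<forall>i\<in>{1..k}. sig i permutes {1..n}" "i \<le> k"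
  shows "deck sig i permutes {1..n}"
  using assms(2)
proof (induction i)
  case 0 thus ?case by (simp add: permutes_def)
next
  case (Suc i)
  have "sig (Suc i) permutes {1..n}" using assms(1) Suc.prems by auto
  moreover have "deck sig i permutes {1..n}" using Suc by auto
  ultimately have "deck sig i \<circ> sig (Suc i) permutes {1..n}" by (rule permutes_compose)
  thus ?case by (simp only: deck.simps)
qed

lemma termB_perm: "termB n b s \<Longrightarrow> s permutes {1..n}" by (simp add: termB_def)

lemma inv_step:
  assumes tb: "\<forall>i\<in>{1..k}. termB n (a i) (sig i)" and t: "t permutes {1..n}"
    and i: "i \<in> {1..k}"
    and IH: "\<forall>x\<in>{1..n}. \<forall>y\<in>{1..n}. inv (deck sig i) x < inv (deck sig i) y \<longleftrightarrow>
       keyf (hits k a sig) (Apart a k) t (Apart a i) x < keyf (hits k a sig) (Apart a k) t (Apart a i) y"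
  shows "\<forall>x\<in>{1..n}. \<forall>y\<in>{1..n}. inv (deck sig (i-1)) x < inv (deck sig (i-1)) y \<longleftrightarrow>
       keyf (hits k a sig) (Apart a k) t (Apart a (i-1)) x < keyf (hits k a sig) (Apart a k) t (Apart a (i-1)) y"
proof -
  let ?H = "hits k a sig" and ?N = "Apart a k"
  let ?K = "keyf ?H ?N t (Apart a i)" and ?K' = "keyf ?H ?N t (Apart a (i-1))"
  let ?p = "inv (deck sig i)" and ?p' = "inv (deck sig (i-1))"
  have perms: "\<forall>i\<in>{1..k}. sig i permutes {1..n}" using tb termB_perm by blast
  have Pi: "deck sig i permutes {1..n}" using deck_perm[OF perms] i by auto
  have Pi': "deck sig (i-1) permutes {1..n}" using deck_perm[OF perms] i by auto
  have si: "sig i permutes {1..n}" using perms i by auto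
  have dSuc: "deck sig i = deck sig (i-1) \<circ> sig i" using i by (cases i) auto
  have ApS: "Apart a i = Apart a (i-1) + a i" using i Apart_Suc[of a "i-1"] by (cases i) auto
  have AiN: "Apart a i \<le> ?N" using i by (intro Apart_mono) auto
  have pp: "?p' x = sig i (?p x)" for x
  proof -
    have "deck sig (i-1) (sig i (?p x)) = x" using dSuc permutes_inverses(1)[OF Pi] by (metis comp_apply)
    thus ?thesis using permutes_inverses(2)[OF Pi'] by metis
  qed
  have pin: "?p x \<in> {1..n}" "?p' x \<in> {1..n}" if "x \<in> {1..n}" for x
    using that permutes_in_image[OF permutes_inv[OF Pi]] permutes_in_image[OF permutes_inv[OF Pi']] by auto
  have hseg: "?H (Apart a (i-1) + m) x \<longleftrightarrow> ?p' x = m" if "m \<in> {1..a i}" for m x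
    using hits_seg[where i=i and k=k and a=a and m=m and sig=sig and c=x, OF i that] permutes_inv_eq[OF Pi'] by metis
  have F1: "?K' x = Apart a (i-1) + ?p' x" if "x \<in> {1..n}" "?p' x \<le> a i" for x
  proof (rule K_exact)
    have m: "?p' x \<in> {1..a i}" using pin[OF that(1)] that(2) by auto
    show "?H (Apart a (i - 1) + ?p' x) x" using hseg[OF m] by simp
    show "Apart a (i - 1) < Apart a (i - 1) + ?p' x" using m by auto
    fix l' assume l': "Apart a (i - 1) < l'" "l' < Apart a (i - 1) + ?p' x"
    define m' where "m' = l' - Apart a (i-1)"
    have m': "m' \<in> {1..a i}" "l' = Apart a (i-1) + m'" using l' m unfolding m'_def by auto
    show "\<not> ?H l' x" using hseg[OF m'(1)] m' l' by auto
  qed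
  have F2: "?K' x = ?K x \<and> Apart a i < ?K x" if "x \<in> {1..n}" "\<not> ?p' x \<le> a i" for x
  proof
    show "?K' x = ?K x"
    proof (rule K_skip)
      show "Apart a (i - 1) \<le> Apart a i" using ApS by simp
      fix l assume l: "Apart a (i - 1) < l" "l \<le> Apart a i"
      define m where "m = l - Apart a (i-1)"
      have m: "m \<in> {1..a i}" "l = Apart a (i-1) + m" using l ApS unfolding m_def by auto
      show "\<not> ?H l x" using hseg[OF m(1)] m that by auto
    qed
    show "Apart a i < ?K x" using K_gt[OF t that(1) AiN] .
  qed
  have Hle: "?K' x \<le> Apart a i" if "x \<in> {1..n}" "?p' x \<le> a i" for x
    using F1[OF that] that ApS by simp
  show ?thesis
  proof (intro ballI)
    fix x y assume x: "x \<in> {1..n}" and y: "y \<in> {1..n}"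
    show "?p' x < ?p' y \<longleftrightarrow> ?K' x < ?K' y"
    proof (cases "?p' x \<le> a i")
      case xa: True
      show ?thesis
      proof (cases "?p' y \<le> a i")
        case True thus ?thesis using F1[OF x xa] F1[OF y True] by simp
      next
        case False thus ?thesis using Hle[OF x xa] F2[OF y False] xa by simp
      qed
    next
      case xa: False
      show ?thesis
      proof (cases "?p' y \<le> a i")
        case True thus ?thesis using Hle[OF y True] F2[OF x xa] xa by simp
      next
        case ya: False
        have ord: "?p' u < ?p' v" if "u\<in>{1..n}" "v\<in>{1..n}" "\<not> ?p' u \<le> a i"
          "\<not> ?p' v \<le> a i" "?p u < ?p v" for u v
        proof -
          have "\<forall>p\<in>{1..n}. \<forall>q\<in>{1..n}. p < q \<and> a i < sig i p \<and> a i < sig i q \<longrightarrow> sig i p < sig i q"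
            using tb i unfolding termB_def by blast
          thus ?thesis using that pin pp by (metis not_le)
        qed
        have "?p' x < ?p' y \<longleftrightarrow> ?p x < ?p y"
        proof
          assume "?p x < ?p y" thus "?p' x < ?p' y" using ord x y xa ya by blast
        next
          assume A: "?p' x < ?p' y"
          show "?p x < ?p y"
          proof (rule ccontr)
            assume "\<not> ?p x < ?p y"
            hence "?p y < ?p x \<or> ?p x = ?p y" by auto
            thus False
            proof
              assume "?p y < ?p x" thus False using ord[OF y x ya xa] A by auto
            next
              assume "?p x = ?p y" thus False using A pp by simp
            qed
          qed
        qed
        also have "\<dots> \<longleftrightarrow> ?K x < ?K y" using IH x y by blast
        also have "\<dots> \<longleftrightarrow> ?K' x < ?K' y" using F2[OF x xa] F2[OF y ya] by simp
        finally show ?thesis .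
      qed
    qed
  qed
qed



lemma invariant:
  assumes tb: "\<forall>i\<in>{1..k}. termB n (a i) (sig i)" and dk: "deck sig k = t" and ik: "i \<le> k"
  shows "\<forall>x\<in>{1..n}. \<forall>y\<in>{1..n}. inv (deck sig i) x < inv (deck sig i) y \<longleftrightarrow>
       keyf (hits k a sig) (Apart a k) t (Apart a i) x < keyf (hits k a sig) (Apart a k) t (Apart a i) y"
proof -
  have perms: "\<forall>i\<in>{1..k}. sig i permutes {1..n}" using tb termB_perm by blast
  have t: "t permutes {1..n}" using deck_perm[OF perms, of k] dk by simp
  have "\<forall>x\<in>{1..n}. \<forall>y\<in>{1..n}. inv (deck sig (k-r)) x < inv (deck sig (k-r)) y \<longleftrightarrow>
       keyf (hits k a sig) (Apart a k) t (Apart a (k-r)) x < keyf (hits k a sig) (Apart a k) t (Apart a (k-r)) y"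
    if "r \<le> k" for r
    using that
  proof (induction r)
    case 0
    have "keyf (hits k a sig) (Apart a k) t (Apart a k) x = Apart a k + inv t x" for x
      by (rule K_nohit) (use hits_range in fastforce)
    thus ?case using dk by simp
  next
    case (Suc r)
    have i: "k - r \<in> {1..k}" using Suc.prems by auto
    have e: "k - Suc r = k - r - 1" by simp
    show ?case unfolding e by (rule inv_step[OF tb t i]) (use Suc in auto)
  qed
  from this[of "k - i"] ik show ?thesis by simp
qed

lemma pos_formula:
  assumes tb: "\<forall>i\<in>{1..k}. termB n (a i) (sig i)" and dk: "deck sig k = t" and ik: "i \<le> k"
    and x: "x \<in> {1..n}"
  shows "inv (deck sig i) x = card {y\<in>{1..n}. keyf (hits k a sig) (Apart a k) t (Apart a i) y \<le>
            keyf (hits k a sig) (Apart a k) t (Apart a i) x}"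
proof -
  have perms: "\<forall>i\<in>{1..k}. sig i permutes {1..n}" using tb termB_perm by blast
  have P: "inv (deck sig i) permutes {1..n}" using deck_perm[OF perms ik] permutes_inv by blast
  have "inv (deck sig i) x = card {y\<in>{1..n}. inv (deck sig i) y \<le> inv (deck sig i) x}"
    by (rule bij_rank[OF permutes_imp_bij[OF P] x])
  also have "{y\<in>{1..n}. inv (deck sig i) y \<le> inv (deck sig i) x} =
     {y\<in>{1..n}. keyf (hits k a sig) (Apart a k) t (Apart a i) y \<le> keyf (hits k a sig) (Apart a k) t (Apart a i) x}"
    using invariant[OF tb dk ik] x by (auto simp: not_less[symmetric])
  finally show ?thesis .
qed

lemma least_unique:
  assumes "(u::nat) \<in> S" "\<forall>l\<in>S. u \<le> l" "v \<in> S" "\<forall>l\<in>S. v \<le> l"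
  shows "u = v"
  using assms by (meson le_antisym)

lemma first_occ:
  assumes D: "sig \<in> Dset n k a j t" and jn: "j \<le> n"
  shows "\<forall>c\<in>{1..j}. keyf (hits k a sig) (Apart a k) t 0 c \<in> {l\<in>{1..Apart a k}. hits k a sig l c} \<and>
            (\<forall>l\<in>{l\<in>{1..Apart a k}. hits k a sig l c}. keyf (hits k a sig) (Apart a k) t 0 c \<le> l)"
    and "\<forall>x\<in>{1..j}. \<forall>y\<in>{1..j}. x < y \<longrightarrow> keyf (hits k a sig) (Apart a k) t 0 x < keyf (hits k a sig) (Apart a k) t 0 y"
proof -
  have tb: "\<forall>i\<in>{1..k}. termB n (a i) (sig i)" and dk: "deck sig k = t"
    and ch: "cards_hit k a sig = {1..j}" using D unfolding Dset_def by auto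
  show "\<forall>c\<in>{1..j}. keyf (hits k a sig) (Apart a k) t 0 c \<in> {l\<in>{1..Apart a k}. hits k a sig l c} \<and>
            (\<forall>l\<in>{l\<in>{1..Apart a k}. hits k a sig l c}. keyf (hits k a sig) (Apart a k) t 0 c \<le> l)"
  proof
    fix c assume "c \<in> {1..j}"
    hence "c \<in> {c. \<exists>l\<in>{1..Apart a k}. hits k a sig l c}" using ch[unfolded cards_hit_def] by simp
    then obtain l where l: "hits k a sig l c" by blast
    have l0: "0 < l" using hits_range[OF l] by auto
    from K_hit[of "hits k a sig" l c 0 "Apart a k" t, OF l l0]
    have K: "hits k a sig (keyf (hits k a sig) (Apart a k) t 0 c) c" by blast
    show "keyf (hits k a sig) (Apart a k) t 0 c \<in> {l\<in>{1..Apart a k}. hits k a sig l c} \<and>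
            (\<forall>l\<in>{l\<in>{1..Apart a k}. hits k a sig l c}. keyf (hits k a sig) (Apart a k) t 0 c \<le> l)"
      using K hits_range[OF K] K_hit[of "hits k a sig" _ c 0 "Apart a k" t] by auto
  qed
  show "\<forall>x\<in>{1..j}. \<forall>y\<in>{1..j}. x < y \<longrightarrow> keyf (hits k a sig) (Apart a k) t 0 x < keyf (hits k a sig) (Apart a k) t 0 y"
    using invariant[OF tb dk, of 0] jn by auto
qed

lemma phi_inj:
  assumes D: "sig \<in> Dset n k a j t" and D': "sig' \<in> Dset n k a j t" and jn: "j \<le> n"
    and eq: "phi k a j sig = phi k a j sig'"
  shows "sig = sig'"
proof -
  let ?H = "hits k a sig" and ?H' = "hits k a sig'" and ?N = "Apart a k"
  define al where "al c = {l\<in>{1..?N}. ?H l c}" for c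
  define al' where "al' c = {l\<in>{1..?N}. ?H' l c}" for c
  define f where "f = keyf ?H ?N t 0"
  define g where "g = keyf ?H' ?N t 0"
  note fo = first_occ[OF D jn, folded al_def f_def] and fo' = first_occ[OF D' jn, folded al'_def g_def]
  have phe: "al ` {1..j} = al' ` {1..j}" using eq unfolding phi_def al_def al'_def by simp
  have img: "f ` {1..j} = g ` {1..j}"
  proof -
    have A: "\<exists>d\<in>{1..j}. f c = g d" if c: "c \<in> {1..j}" for c
    proof -
      obtain d where d: "d \<in> {1..j}" "al c = al' d" using phe c by (metis imageE imageI)
      thus ?thesis using least_unique[of "f c" "al c" "g d"] fo(1) fo'(1) c by (metis d(1))
    qed
    have B: "\<exists>d\<in>{1..j}. g c = f d" if c: "c \<in> {1..j}" for c
    proof -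
      obtain d where d: "d \<in> {1..j}" "al' c = al d" using phe c by (metis imageE imageI)
      thus ?thesis using least_unique[of "g c" "al' c" "f d"] fo(1) fo'(1) c by (metis d(1))
    qed
    show ?thesis
    proof
      show "f ` {1..j} \<subseteq> g ` {1..j}"
      proof
        fix x assume "x \<in> f ` {1..j}"
        then obtain c where c: "c \<in> {1..j}" "x = f c" by blast
        then obtain d where "d \<in> {1..j}" "f c = g d" using A by blast
        thus "x \<in> g ` {1..j}" using c by blast
      qed
      show "g ` {1..j} \<subseteq> f ` {1..j}"
      proof
        fix x assume "x \<in> g ` {1..j}"
        then obtain c where c: "c \<in> {1..j}" "x = g c" by blast
        then obtain d where "d \<in> {1..j}" "g c = f d" using B by blast
        thus "x \<in> f ` {1..j}" using c by blast
      qed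
    qed
  qed
  have aleq: "al c = al' c" if c: "c \<in> {1..j}" for c
  proof -
    have fg: "f c = g c" by (rule enum_unique[OF fo(2) fo'(2) img c])
    obtain d where d: "d \<in> {1..j}" "al c = al' d" using phe c by (metis imageE imageI)
    have "g d = f c" using least_unique[of "f c" "al c" "g d"] fo(1) fo'(1) c d by metis
    hence "g d = g c" using fg by simp
    hence "d = c" using fo'(2) c d(1) by (metis linorder_neqE_nat less_irrefl)
    thus ?thesis using d by simp
  qed
  have ch: "cards_hit k a sig = {1..j}" "cards_hit k a sig' = {1..j}" using D D' unfolding Dset_def by auto
  have Heq: "?H = ?H'"
  proof (intro ext)
    fix l c
    show "?H l c = ?H' l c"
    proof (cases "c \<in> {1..j}")
      case True
      thus ?thesis using aleq[OF True] hits_range[of k a sig l c] hits_range[of k a sig' l c]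
        unfolding al_def al'_def by blast
    next
      case False
      thus ?thesis using ch hits_range[of k a sig l c] hits_range[of k a sig' l c]
        unfolding cards_hit_def by blast
    qed
  qed
  have tb: "\<forall>i\<in>{1..k}. termB n (a i) (sig i)" and dk: "deck sig k = t"
    and tb': "\<forall>i\<in>{1..k}. termB n (a i) (sig' i)" and dk': "deck sig' k = t"
    and out: "\<forall>i. i \<notin> {1..k} \<longrightarrow> sig i = id" "\<forall>i. i \<notin> {1..k} \<longrightarrow> sig' i = id"
    using D D' unfolding Dset_def by auto
  have perms: "\<forall>i\<in>{1..k}. sig i permutes {1..n}" "\<forall>i\<in>{1..k}. sig' i permutes {1..n}"
    using tb tb' termB_perm by blast+
  have deq: "deck sig i = deck sig' i" if ik: "i \<le> k" for i
  proof -
    have P: "deck sig i permutes {1..n}" "deck sig' i permutes {1..n}"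
      using deck_perm[OF perms(1) ik] deck_perm[OF perms(2) ik] by auto
    have "inv (deck sig i) x = inv (deck sig' i) x" for x
    proof (cases "x \<in> {1..n}")
      case True
      show ?thesis using pos_formula[OF tb dk ik True] pos_formula[OF tb' dk' ik True] Heq by simp
    next
      case False
      thus ?thesis using permutes_not_in[OF permutes_inv[OF P(1)]] permutes_not_in[OF permutes_inv[OF P(2)]]
        by simp
    qed
    hence "inv (deck sig i) = inv (deck sig' i)" by auto
    thus ?thesis using permutes_inv_inv[OF P(1)] permutes_inv_inv[OF P(2)] by metis
  qed
  show ?thesis
  proof (intro ext)
    fix i x
    show "sig i x = sig' i x"
    proof (cases "i \<in> {1..k}")
      case True
      have dS: "deck sig i = deck sig (i-1) \<circ> sig i" "deck sig' i = deck sig' (i-1) \<circ> sig' i"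
        using True by (cases i, auto)+
      have P: "deck sig (i-1) permutes {1..n}" using deck_perm[OF perms(1)] True by auto
      have e1: "deck sig i = deck sig' i" "deck sig (i-1) = deck sig' (i-1)" using deq True by auto
      have "deck sig (i-1) \<circ> sig i = deck sig (i-1) \<circ> sig' i" using dS e1 by simp
      hence "deck sig (i-1) (sig i x) = deck sig (i-1) (sig' i x)" by (metis comp_apply)
      thus ?thesis using permutes_inj[OF P] by (simp add: inj_eq)
    next
      case False thus ?thesis using out by simp
    qed
  qed
qed


lemma hits_fun:
  assumes "hits k a sig l c" "hits k a sig l c'"
  shows "c = c'"
proof -
  obtain i m where A: "i\<in>{1..k}" "m\<in>{1..a i}" "l = Apart a (i - 1) + m" "deck sig (i - 1) m = c"
    using assms(1) unfolding hits_def by auto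
  obtain i' m' where B: "i'\<in>{1..k}" "m'\<in>{1..a i'}" "l = Apart a (i' - 1) + m'" "deck sig (i' - 1) m' = c'"
    using assms(2) unfolding hits_def by auto
  have "i = i' \<and> m = m'" using decomp_unique[of a i m i' m'] A B by auto
  thus ?thesis using A(4) B(4) by blast
qed

lemma phi_in_Q:
  assumes D: "sig \<in> Dset n k a j t"
  shows "phi k a j sig \<in> Qset k a j"
proof -
  let ?H = "hits k a sig" and ?N = "Apart a k"
  define al where "al c = {l\<in>{1..?N}. ?H l c}" for c
  have tb: "\<forall>i\<in>{1..k}. termB n (a i) (sig i)" and ch: "cards_hit k a sig = {1..j}"
    using D unfolding Dset_def by auto
  have perms: "\<forall>i\<in>{1..k}. sig i permutes {1..n}" using tb termB_perm by blast
  have ph: "phi k a j sig = al ` {1..j}" unfolding phi_def al_def by (rule refl)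
  have ne: "al c \<noteq> {}" if "c \<in> {1..j}" for c
  proof -
    have "c \<in> cards_hit k a sig" using ch that by simp
    then obtain l where "l \<in> {1..Apart a k}" "hits k a sig l c" unfolding cards_hit_def by blast
    thus ?thesis unfolding al_def by blast
  qed
  have dis: "al c \<inter> al c' = {}" if "c \<noteq> c'" for c c'
  proof -
    have "\<not> (?H l c \<and> ?H l c')" for l using hits_fun[of k a sig l c c'] that by blast
    thus ?thesis unfolding al_def by blast
  qed
  have inj: "inj_on al {1..j}"
  proof (rule inj_onI)
    fix x y assume x: "x \<in> {1..j}" and y: "y \<in> {1..j}" and e: "al x = al y"
    show "x = y"
    proof (rule ccontr)
      assume "x \<noteq> y"
      hence "al x \<inter> al y = {}" by (rule dis)
      thus False using e ne[OF x] by simp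
    qed
  qed
  have part: "partition_on {1..?N} (al ` {1..j})"
  proof (rule partition_onI)
    show "\<Union> (al ` {1..j}) = {1..?N}"
    proof
      show "\<Union> (al ` {1..j}) \<subseteq> {1..?N}" unfolding al_def by blast
      show "{1..?N} \<subseteq> \<Union> (al ` {1..j})"
      proof
        fix l assume l: "l \<in> {1..?N}"
        obtain i m where im: "i\<in>{1..k}" "m\<in>{1..a i}" "l = Apart a (i - 1) + m"
          using decomp_exists[OF l] by blast
        have h: "?H l (deck sig (i-1) m)" unfolding im(3)
          using hits_seg[where i=i and k=k and a=a and m=m and sig=sig and c="deck sig (i-1) m", OF im(1,2)] by blast
        have "deck sig (i-1) m \<in> cards_hit k a sig" unfolding cards_hit_def using l h by blast
        hence cj: "deck sig (i-1) m \<in> {1..j}" using ch by simp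
        have "l \<in> al (deck sig (i-1) m)" unfolding al_def using l h by blast
        thus "l \<in> \<Union> (al ` {1..j})" using cj by blast
      qed
    qed
    show "disjnt p q" if pq: "p \<in> al ` {1..j}" "q \<in> al ` {1..j}" "p \<noteq> q" for p q
    proof -
      obtain c c' where "p = al c" "q = al c'" using pq by blast
      hence "c \<noteq> c'" using pq by blast
      hence "al c \<inter> al c' = {}" by (rule dis)
      thus ?thesis unfolding disjnt_def using \<open>p = al c\<close> \<open>q = al c'\<close> by simp
    qed
    show "{} \<notin> al ` {1..j}" using ne by force
  qed
  have segc: "\<forall>B\<in>al ` {1..j}. \<forall>i\<in>{1..k}. \<forall>x\<in>B. \<forall>y\<in>B. x \<in> seg a i \<and> y \<in> seg a i \<longrightarrow> x = y"
  proof (intro ballI impI)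
    fix B i x y assume B: "B \<in> al ` {1..j}" and i: "i \<in> {1..k}" and xy: "x \<in> B" "y \<in> B"
      and s: "x \<in> seg a i \<and> y \<in> seg a i"
    obtain c where c: "B = al c" using B by auto
    have ApS: "Apart a i = Apart a (i-1) + a i" using i Apart_Suc[of a "i-1"] by (cases i) auto
    define m where "m = x - Apart a (i-1)"
    define m' where "m' = y - Apart a (i-1)"
    have m: "m \<in> {1..a i}" "x = Apart a (i-1) + m" "m' \<in> {1..a i}" "y = Apart a (i-1) + m'"
      using s ApS unfolding m_def m'_def seg_def by auto
    have "x \<in> al c" "y \<in> al c" using xy c by auto
    hence "?H x c" "?H y c" unfolding al_def by auto
    hence "?H (Apart a (i-1) + m) c" "?H (Apart a (i-1) + m') c" using m(2,4) by auto
    hence "deck sig (i-1) m = c" "deck sig (i-1) m' = c"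
      using hits_seg[where i=i and k=k and a=a and m=m and sig=sig and c=c, OF i m(1)]
        hits_seg[where i=i and k=k and a=a and m=m' and sig=sig and c=c, OF i m(3)] by auto
    moreover have "deck sig (i-1) permutes {1..n}" using deck_perm[OF perms, of "i-1"] i by auto
    hence "inj (deck sig (i-1))" by (rule permutes_inj)
    ultimately have "m = m'" by (metis injD)
    thus "x = y" using m by simp
  qed
  have cj: "card (al ` {1..j}) = j" using inj by (simp add: card_image)
  show ?thesis unfolding ph Qset_def using part segc cj by blast
qed


locale sctx =
  fixes n k j :: nat and a :: "nat \<Rightarrow> nat" and t :: "nat \<Rightarrow> nat" and P :: "nat set set"
  assumes ai: "\<forall>i\<in>{1..k}. a i \<in> {1..n}"
    and jn: "j \<le> n"
    and tB: "termB n j t"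
    and PQ: "P \<in> Qset k a j"
begin

abbreviation "N \<equiv> Apart a k"
definition mn :: "nat set \<Rightarrow> nat" where "mn B = (LEAST l. l \<in> B)"
definition lab where "lab B = card {x \<in> mn ` P. x \<le> mn B}"
definition bet where "bet = inv_into P lab"
definition R where "R l c \<longleftrightarrow> c \<in> {1..j} \<and> l \<in> bet c"
definition K where "K i = keyf R N t (Apart a i)"
definition pos where "pos i c = (if c \<in> {1..n} then card {y\<in>{1..n}. K i y \<le> K i c} else c)"
definition sg where "sg i = (if i \<in> {1..k} then pos (i-1) \<circ> inv (pos i) else id)"

lemma part: "partition_on {1..N} P" and cardP: "card P = j"
  and segP: "\<forall>B\<in>P. \<forall>i\<in>{1..k}. \<forall>x\<in>B. \<forall>y\<in>B. x \<in> seg a i \<and> y \<in> seg a i \<longrightarrow> x = y"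
  using PQ unfolding Qset_def by auto

lemma finP: "finite P"
  using part unfolding partition_on_def by (metis finite_UnionD finite_atLeastAtMost)

lemma blk: "B \<in> P \<Longrightarrow> B \<noteq> {} \<and> B \<subseteq> {1..N}"
  using part unfolding partition_on_def by auto

lemma cover: "l \<in> {1..N} \<Longrightarrow> \<exists>B\<in>P. l \<in> B"
  using part unfolding partition_on_def by auto

lemma disj: "B \<in> P \<Longrightarrow> B' \<in> P \<Longrightarrow> l \<in> B \<Longrightarrow> l \<in> B' \<Longrightarrow> B = B'"
  using part unfolding partition_on_def disjoint_def by blast

lemma mn: "B \<in> P \<Longrightarrow> mn B \<in> B \<and> (\<forall>l\<in>B. mn B \<le> l)"
proof -
  assume B: "B \<in> P"
  then obtain x where "x \<in> B" using blk by blast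
  hence "mn B \<in> B" unfolding mn_def by (rule LeastI)
  moreover have "\<forall>l\<in>B. mn B \<le> l" unfolding mn_def by (auto intro: Least_le)
  ultimately show ?thesis by blast
qed

lemma mn_inj: "inj_on mn P"
  by (intro inj_onI) (metis mn disj)

lemma lab_bij: "bij_betw lab P {1..j}"
proof -
  have b1: "bij_betw mn P (mn ` P)" using mn_inj by (simp add: bij_betw_def)
  have c: "card (mn ` P) = j" using mn_inj cardP by (simp add: card_image)
  have b2: "bij_betw (\<lambda>s. card {x \<in> mn ` P. x \<le> s}) (mn ` P) {1..j}"
    using rank_bij[of "mn ` P"] finP c by simp
  have "bij_betw ((\<lambda>s. card {x \<in> mn ` P. x \<le> s}) \<circ> mn) P {1..j}"
    by (rule bij_betw_trans[OF b1 b2])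
  thus ?thesis unfolding lab_def comp_def by simp
qed

lemma lab_mono: "B \<in> P \<Longrightarrow> B' \<in> P \<Longrightarrow> lab B < lab B' \<Longrightarrow> mn B < mn B'"
proof (rule ccontr)
  assume B: "B \<in> P" "B' \<in> P" "lab B < lab B'" "\<not> mn B < mn B'"
  hence "{x \<in> mn ` P. x \<le> mn B'} \<subseteq> {x \<in> mn ` P. x \<le> mn B}" by auto
  hence "lab B' \<le> lab B" unfolding lab_def using finP by (intro card_mono) auto
  thus False using B by simp
qed

lemma bet_bij: "bij_betw bet {1..j} P"
  unfolding bet_def by (rule bij_betw_inv_into[OF lab_bij])

lemma lab_bet: "c \<in> {1..j} \<Longrightarrow> lab (bet c) = c"
  unfolding bet_def using lab_bij by (simp add: bij_betw_inv_into_right)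

lemma bet_in: "c \<in> {1..j} \<Longrightarrow> bet c \<in> P"
  using bet_bij unfolding bij_betw_def by auto

lemma R_rng: "R l c \<Longrightarrow> l \<in> {1..N} \<and> c \<in> {1..j}"
  unfolding R_def using bet_in blk by blast

lemma R_fun: "R l c \<Longrightarrow> R l c' \<Longrightarrow> c = c'"
proof -
  assume "R l c" "R l c'"
  hence "c \<in> {1..j}" "c' \<in> {1..j}" "l \<in> bet c" "l \<in> bet c'" unfolding R_def by auto
  hence "bet c = bet c'" using disj bet_in by blast
  thus "c = c'" using lab_bet \<open>c \<in> {1..j}\<close> \<open>c' \<in> {1..j}\<close> by metis
qed

lemma R_ex: "l \<in> {1..N} \<Longrightarrow> \<exists>c. R l c"
proof -
  assume "l \<in> {1..N}"
  then obtain B where B: "B \<in> P" "l \<in> B" using cover by blast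
  have "lab B \<in> {1..j}" using lab_bij B unfolding bij_betw_def by auto
  moreover have "bet (lab B) = B" unfolding bet_def using lab_bij B by (simp add: bij_betw_inv_into_left)
  ultimately show ?thesis using B unfolding R_def by blast
qed

lemma R_seg: "R l c \<Longrightarrow> R l' c \<Longrightarrow> i \<in> {1..k} \<Longrightarrow> l \<in> seg a i \<Longrightarrow> l' \<in> seg a i \<Longrightarrow> l = l'"
  unfolding R_def using segP bet_in by blast

lemma tperm: "t permutes {1..n}" using tB termB_perm by blast

lemma Kinj: "inj_on (K i) {1..n}"
proof (rule inj_onI)
  fix x y assume xy: "x \<in> {1..n}" "y \<in> {1..n}" "K i x = K i y"
  show "x = y"
    by (rule K_inj[where R=R and N=N and t=t and n=n and A="Apart a i"])
       (use R_rng R_fun tperm xy in \<open>auto simp: K_def\<close>)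
qed


lemma pos_in: "c \<in> {1..n} \<Longrightarrow> pos i c = card {x \<in> K i ` {1..n}. x \<le> K i c}"
proof -
  assume c: "c \<in> {1..n}"
  have "K i ` {y\<in>{1..n}. K i y \<le> K i c} = {x \<in> K i ` {1..n}. x \<le> K i c}" by blast
  moreover have "inj_on (K i) {y\<in>{1..n}. K i y \<le> K i c}" using Kinj by (rule inj_on_subset) auto
  ultimately have "card {y\<in>{1..n}. K i y \<le> K i c} = card {x \<in> K i ` {1..n}. x \<le> K i c}"
    by (metis (no_types, lifting) card_image)
  moreover have "pos i c = card {y\<in>{1..n}. K i y \<le> K i c}" unfolding pos_def using c by (rule if_P)
  ultimately show ?thesis by simp
qed

lemma pos_bij: "bij_betw (pos i) {1..n} {1..n}"
proof -
  have b1: "bij_betw (K i) {1..n} (K i ` {1..n})" using Kinj by (simp add: bij_betw_def)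
  have c: "card (K i ` {1..n}) = n" using Kinj by (simp add: card_image)
  have b2: "bij_betw (\<lambda>s. card {x \<in> K i ` {1..n}. x \<le> s}) (K i ` {1..n}) {1..n}"
    using rank_bij[of "K i ` {1..n}"] c by simp
  have "bij_betw ((\<lambda>s. card {x \<in> K i ` {1..n}. x \<le> s}) \<circ> K i) {1..n} {1..n}"
    by (rule bij_betw_trans[OF b1 b2])
  moreover have "bij_betw ((\<lambda>s. card {x \<in> K i ` {1..n}. x \<le> s}) \<circ> K i) {1..n} {1..n} = bij_betw (pos i) {1..n} {1..n}"
    by (rule bij_betw_cong) (simp add: pos_in)
  ultimately show ?thesis by simp
qed

lemma pos_out: "c \<notin> {1..n} \<Longrightarrow> pos i c = c"
  unfolding pos_def by (rule if_not_P)

lemma pos_perm: "pos i permutes {1..n}"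
  by (rule bij_imp_permutes[OF pos_bij]) (rule pos_out)

lemma pos_less: "x \<in> {1..n} \<Longrightarrow> y \<in> {1..n} \<Longrightarrow> pos i x < pos i y \<longleftrightarrow> K i x < K i y"
proof -
  assume x: "x \<in> {1..n}" and y: "y \<in> {1..n}"
  have m: "pos i u < pos i v" if uv: "u \<in> {1..n}" "v \<in> {1..n}" "K i u < K i v" for u v
  proof -
    have "card {x\<in>K i ` {1..n}. x \<le> K i u} < card {x\<in>K i ` {1..n}. x \<le> K i v}"
      by (rule rank_mono) (use uv in \<open>simp_all add: imageI\<close>)
    thus ?thesis using pos_in[OF uv(1)] pos_in[OF uv(2)] by simp
  qed
  show ?thesis
  proof
    assume "K i x < K i y" thus "pos i x < pos i y" using m x y by blast
  next
    assume A: "pos i x < pos i y"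
    show "K i x < K i y"
    proof (rule ccontr)
      assume "\<not> K i x < K i y"
      hence "K i y < K i x \<or> K i x = K i y" by auto
      thus False
      proof
        assume "K i y < K i x" thus False using m[OF y x] A by simp
      next
        assume "K i x = K i y" hence "x = y" using Kinj x y by (meson inj_onD)
        thus False using A by simp
      qed
    qed
  qed
qed

lemma pos_k: "inv (pos k) = t"
proof -
  have "pos k c = inv t c" for c
  proof (cases "c \<in> {1..n}")
    case True
    have Kk: "K k y = N + inv t y" for y
      unfolding K_def by (rule K_nohit) (use R_rng in fastforce)
    have ib: "bij_betw (inv t) {1..n} {1..n}" using permutes_imp_bij[OF permutes_inv[OF tperm]] .
    have "pos k c = card {y\<in>{1..n}. inv t y \<le> inv t c}" using True unfolding pos_def Kk by simp
    also have "\<dots> = inv t c" using bij_rank[OF ib True] by simp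
    finally show ?thesis .
  next
    case False
    thus ?thesis using permutes_not_in[OF permutes_inv[OF tperm]] pos_out by simp
  qed
  hence "pos k = inv t" by auto
  thus ?thesis using permutes_inv_inv[OF tperm] by simp
qed

lemma K0_low: "c \<in> {1..j} \<Longrightarrow> K 0 c = mn (bet c)"
proof -
  assume c: "c \<in> {1..j}"
  have B: "bet c \<in> P" using bet_in c .
  show ?thesis unfolding K_def Apart_0
  proof (rule K_exact)
    show "R (mn (bet c)) c" unfolding R_def using c mn[OF B] by auto
    show "0 < mn (bet c)" using mn[OF B] blk[OF B] by auto
    fix l' assume "0 < l'" "l' < mn (bet c)"
    thus "\<not> R l' c" unfolding R_def using mn[OF B] by auto
  qed
qed

lemma K0_high: "c \<notin> {1..j} \<Longrightarrow> K 0 c = N + inv t c"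
  unfolding K_def by (rule K_nohit) (use R_rng in blast)

lemma K0_mono: "x \<in> {1..n} \<Longrightarrow> y \<in> {1..n} \<Longrightarrow> x < y \<Longrightarrow> K 0 x < K 0 y"
proof -
  assume x: "x \<in> {1..n}" and y: "y \<in> {1..n}" and xy: "x < y"
  have it: "inv t u \<in> {1..n}" if "u \<in> {1..n}" for u
    using that permutes_in_image[OF permutes_inv[OF tperm]] by simp
  show ?thesis
  proof (cases "y \<le> j")
    case True
    hence xj: "x \<in> {1..j}" "y \<in> {1..j}" using x y xy by auto
    have "lab (bet x) < lab (bet y)" using lab_bet xj xy by simp
    hence "mn (bet x) < mn (bet y)" using lab_mono bet_in xj by blast
    thus ?thesis using K0_low xj by simp
  next
    case yj: False
    show ?thesis
    proof (cases "x \<le> j")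
      case True
      hence xj: "x \<in> {1..j}" using x by auto
      have "mn (bet x) \<le> N" using mn[OF bet_in[OF xj]] blk[OF bet_in[OF xj]] by auto
      thus ?thesis using K0_low[OF xj] K0_high[of y] yj it[OF y] by auto
    next
      case False
      have tc: "\<forall>p\<in>{1..n}. \<forall>q\<in>{1..n}. p < q \<and> j < t p \<and> j < t q \<longrightarrow> t p < t q"
        using tB unfolding termB_def by blast
      have tt: "t (inv t u) = u" for u using permutes_inverses(1)[OF tperm] .
      have "inv t x < inv t y"
      proof (rule ccontr)
        assume "\<not> inv t x < inv t y"
        hence "inv t y < inv t x \<or> inv t y = inv t x" by auto
        thus False
        proof
          assume "inv t y < inv t x"
          hence "y < x" using tc it[OF x] it[OF y] tt[of x] tt[of y] False yj by (metis not_le)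
          thus False using xy by simp
        next
          assume "inv t y = inv t x" hence "y = x" using tt by metis
          thus False using xy by simp
        qed
      qed
      thus ?thesis using K0_high[of x] K0_high[of y] False yj by auto
    qed
  qed
qed

lemma pos_0: "pos 0 = id"
proof
  fix c show "pos 0 c = id c"
  proof (cases "c \<in> {1..n}")
    case True
    have eqv: "K 0 y \<le> K 0 c \<longleftrightarrow> y \<le> c" if y: "y \<in> {1..n}" for y
    proof
      assume "K 0 y \<le> K 0 c" thus "y \<le> c" using K0_mono[OF True y] by (meson leD not_le)
    next
      assume "y \<le> c" thus "K 0 y \<le> K 0 c" using K0_mono[OF y True] by (cases "y = c") auto
    qed
    have "{y\<in>{1..n}. K 0 y \<le> K 0 c} = {y\<in>{1..n}. y \<le> c}" using eqv by auto
    also have "\<dots> = {1..c}" using True by auto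
    finally show ?thesis using True unfolding pos_def by simp
  next
    case False thus ?thesis using pos_out by simp
  qed
qed


lemma ApS: "i \<in> {1..k} \<Longrightarrow> Apart a i = Apart a (i-1) + a i"
  using Apart_Suc[of a "i-1"] by (cases i) auto

lemma AN: "i \<le> k \<Longrightarrow> Apart a i \<le> N" by (rule Apart_mono)

lemma sg_perm: "sg i permutes {1..n}"
proof (cases "i \<in> {1..k}")
  case True
  have "pos (i-1) \<circ> inv (pos i) permutes {1..n}"
    by (rule permutes_compose[OF permutes_inv[OF pos_perm] pos_perm])
  moreover have "sg i = pos (i-1) \<circ> inv (pos i)" using True unfolding sg_def by simp
  ultimately show ?thesis by simp
next
  case False
  hence "sg i = id" unfolding sg_def by (rule if_not_P)
  thus ?thesis by simp
qed

lemma deck_sg: "i \<le> k \<Longrightarrow> deck sg i = inv (pos i)"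
proof (induction i)
  case 0 thus ?case using pos_0 by simp
next
  case (Suc i)
  have s: "sg (Suc i) = pos i \<circ> inv (pos (Suc i))" using Suc.prems unfolding sg_def by simp
  have "deck sg (Suc i) = inv (pos i) \<circ> (pos i \<circ> inv (pos (Suc i)))" using Suc s by simp
  also have "\<dots> = (inv (pos i) \<circ> pos i) \<circ> inv (pos (Suc i))" by (simp add: comp_assoc)
  also have "\<dots> = inv (pos (Suc i))" using permutes_inv_o(2)[OF pos_perm] by simp
  finally show ?case .
qed

lemma KL:
  assumes i: "i \<in> {1..k}" and m: "m \<in> {1..a i}" and R: "R (Apart a (i-1) + m) z"
  shows "K (i-1) z = Apart a (i-1) + m"
  unfolding K_def
proof (rule K_exact)
  show "R (Apart a (i - 1) + m) z" by (rule R)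
  show "Apart a (i - 1) < Apart a (i - 1) + m" using m by simp
  fix l' assume l': "Apart a (i - 1) < l'" "l' < Apart a (i - 1) + m"
  show "\<not> R l' z"
  proof
    assume R': "R l' z"
    have "l' \<in> seg a i" "Apart a (i-1) + m \<in> seg a i" using l' m ApS[OF i] unfolding seg_def by auto
    hence "l' = Apart a (i-1) + m" using R_seg[OF R' R i] by simp
    thus False using l' by simp
  qed
qed

lemma pos_seg:
  assumes i: "i \<in> {1..k}" and m: "m \<in> {1..a i}"
  shows "pos (i-1) c = m \<longleftrightarrow> R (Apart a (i-1) + m) c"
proof -
  let ?A = "Apart a (i-1)"
  let ?l = "?A + m"
  have ApSi: "Apart a i = ?A + a i" by (rule ApS[OF i])
  have AiN: "Apart a i \<le> N" using i by (intro AN) auto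
  have AN': "?A \<le> N" using i by (intro AN) auto
  have lN: "?l \<in> {1..N}" using m ApSi AiN by auto
  obtain y where y: "R ?l y" using R_ex[OF lN] by blast
  have yn: "y \<in> {1..n}" using R_rng[OF y] jn by auto
  have Ky: "K (i-1) y = ?l" by (rule KL[OF i m y])
  have img: "K (i-1) ` {z\<in>{1..n}. K (i-1) z \<le> ?l} = {?A+1..?l}"
  proof
    show "K (i-1) ` {z\<in>{1..n}. K (i-1) z \<le> ?l} \<subseteq> {?A+1..?l}"
    proof
      fix x assume "x \<in> K (i-1) ` {z\<in>{1..n}. K (i-1) z \<le> ?l}"
      then obtain z where z: "z \<in> {1..n}" "K (i-1) z \<le> ?l" "x = K (i-1) z" by blast
      have "?A < K (i-1) z" unfolding K_def by (rule K_gt[OF tperm z(1) AN'])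
      thus "x \<in> {?A+1..?l}" using z by simp
    qed
    show "{?A+1..?l} \<subseteq> K (i-1) ` {z\<in>{1..n}. K (i-1) z \<le> ?l}"
    proof
      fix l'' assume l'': "l'' \<in> {?A+1..?l}"
      hence "l'' \<in> {1..N}" using lN by simp
      then obtain z where z: "R l'' z" using R_ex by blast
      have zn: "z \<in> {1..n}" using R_rng[OF z] jn by auto
      have m'': "l'' - ?A \<in> {1..a i}" using l'' m by auto
      have e: "?A + (l'' - ?A) = l''" using l'' by simp
      have "K (i-1) z = l''" using KL[OF i m''] z e by simp
      thus "l'' \<in> K (i-1) ` {z\<in>{1..n}. K (i-1) z \<le> ?l}" using zn l'' by (metis (mono_tags, lifting) atLeastAtMost_iff image_eqI mem_Collect_eq)
    qed
  qed
  have inj: "inj_on (K (i-1)) {z\<in>{1..n}. K (i-1) z \<le> ?l}" using Kinj by (rule inj_on_subset) blast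
  have "card {z\<in>{1..n}. K (i-1) z \<le> ?l} = card {?A+1..?l}"
    using card_image[OF inj] img by simp
  hence py: "pos (i-1) y = m" using yn Ky unfolding pos_def by simp
  show ?thesis
  proof
    assume pc: "pos (i-1) c = m"
    have cn: "c \<in> {1..n}"
    proof (rule ccontr)
      assume "c \<notin> {1..n}"
      hence "c = m" using pc pos_out by simp
      moreover have "a i \<le> n" using ai i by auto
      ultimately show False using \<open>c \<notin> {1..n}\<close> m by auto
    qed
    have "c = y" using pos_bij[of "i-1"] cn yn pc py unfolding bij_betw_def by (metis inj_onD)
    thus "R ?l c" using y by simp
  next
    assume "R ?l c"
    hence "c = y" using R_fun y by blast
    thus "pos (i-1) c = m" using py by simp
  qed
qed

lemma claimC:
  assumes i: "i \<in> {1..k}" and x: "x \<in> {1..n}" and big: "a i < pos (i-1) x"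
  shows "K (i-1) x = K i x"
  unfolding K_def
proof (rule K_skip)
  show "Apart a (i - 1) \<le> Apart a i" using ApS[OF i] by simp
  fix l assume l: "Apart a (i - 1) < l" "l \<le> Apart a i"
  show "\<not> R l x"
  proof
    assume R: "R l x"
    have m: "l - Apart a (i-1) \<in> {1..a i}" using l ApS[OF i] by auto
    have e: "Apart a (i-1) + (l - Apart a (i-1)) = l" using l by simp
    have "pos (i-1) x = l - Apart a (i-1)" using pos_seg[OF i m, of x] R e by simp
    thus False using m big by simp
  qed
qed

lemma sg_termB: "i \<in> {1..k} \<Longrightarrow> termB n (a i) (sg i)"
proof -
  assume i: "i \<in> {1..k}"
  have s: "sg i = pos (i-1) \<circ> inv (pos i)" using i unfolding sg_def by simp
  show ?thesis unfolding termB_def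
  proof (intro conjI ballI impI)
    show "sg i permutes {1..n}" by (rule sg_perm)
    fix p q assume p: "p \<in> {1..n}" and q: "q \<in> {1..n}" and c: "p < q \<and> a i < sg i p \<and> a i < sg i q"
    let ?x = "inv (pos i) p" and ?y = "inv (pos i) q"
    have xy: "?x \<in> {1..n}" "?y \<in> {1..n}" using p q permutes_in_image[OF permutes_inv[OF pos_perm[of i]]] by auto
    have px: "pos i ?x = p" "pos i ?y = q" using permutes_inverses(1)[OF pos_perm] by auto
    have "K i ?x < K i ?y" using pos_less[OF xy, of i] px c by simp
    moreover have "K (i-1) ?x = K i ?x" "K (i-1) ?y = K i ?y"
      using claimC[OF i xy(1)] claimC[OF i xy(2)] c s by auto
    ultimately have "K (i-1) ?x < K (i-1) ?y" by simp
    hence "pos (i-1) ?x < pos (i-1) ?y" using pos_less[OF xy, of "i-1"] by simp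
    thus "sg i p < sg i q" using s by simp
  qed
qed

lemma hits_sg: "hits k a sg l c \<longleftrightarrow> R l c"
proof
  assume "hits k a sg l c"
  then obtain i m where im: "i\<in>{1..k}" "m\<in>{1..a i}" "l = Apart a (i - 1) + m" "deck sg (i - 1) m = c"
    unfolding hits_def by blast
  have "i - 1 \<le> k" using im by auto
  hence "inv (pos (i-1)) m = c" using im deck_sg[of "i-1"] by simp
  hence "pos (i-1) c = m" using permutes_inv_eq[OF pos_perm] by metis
  thus "R l c" using pos_seg[OF im(1,2)] im(3) by simp
next
  assume R: "R l c"
  obtain i m where im: "i\<in>{1..k}" "m\<in>{1..a i}" "l = Apart a (i - 1) + m"
    using decomp_exists R_rng[OF R] by blast
  have "pos (i-1) c = m" using pos_seg[OF im(1,2)] im(3) R by simp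
  hence "inv (pos (i-1)) m = c" using permutes_inv_eq[OF pos_perm] by metis
  moreover have "i - 1 \<le> k" using im by auto
  ultimately have "deck sg (i-1) m = c" using deck_sg[of "i-1"] by simp
  thus "hits k a sg l c" using hits_seg[where k=k and a=a and i=i and m=m and sig=sg and c=c, OF im(1,2)] im(3) by simp
qed

lemma sg_D: "sg \<in> Dset n k a j t"
proof -
  have "cards_hit k a sg = {1..j}"
  proof
    show "cards_hit k a sg \<subseteq> {1..j}" unfolding cards_hit_def hits_sg using R_rng by blast
    show "{1..j} \<subseteq> cards_hit k a sg"
    proof
      fix c assume c: "c \<in> {1..j}"
      obtain l where "l \<in> bet c" using blk[OF bet_in[OF c]] by blast
      hence "R l c" "l \<in> {1..N}" using c blk[OF bet_in[OF c]] unfolding R_def by auto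
      thus "c \<in> cards_hit k a sg" unfolding cards_hit_def hits_sg by blast
    qed
  qed
  moreover have "deck sg k = t" using deck_sg[of k] pos_k by simp
  moreover have "\<forall>i. i \<notin> {1..k} \<longrightarrow> sg i = id" unfolding sg_def by (intro allI impI if_not_P)
  ultimately show ?thesis unfolding Dset_def using sg_termB by blast
qed

lemma phi_sg: "phi k a j sg = P"
proof -
  have "{l \<in> {1..N}. hits k a sg l c} = bet c" if c: "c \<in> {1..j}" for c
    unfolding hits_sg R_def using c blk[OF bet_in[OF c]] by blast
  hence "phi k a j sg = bet ` {1..j}" unfolding phi_def by simp
  also have "\<dots> = P" using bet_bij unfolding bij_betw_def by simp
  finally show ?thesis .
qed

end


theorem theorem3p2:
  fixes n k j :: nat and a :: "nat \<Rightarrow> nat" and t :: "nat \<Rightarrow> nat"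
  assumes "k \<ge> 1"
    and "\<forall>i\<in>{1..k}. a i \<in> {1..n}"
    and "Max (a ` {1..k}) \<le> j" and "j \<le> min (Apart a k) n"
    and "termB n j t"
  shows "bij_betw (phi k a j) (Dset n k a j t) (Qset k a j)"
proof -
  have jn: "j \<le> n" using assms(4) by simp
  show ?thesis unfolding bij_betw_def
  proof
    show "inj_on (phi k a j) (Dset n k a j t)"
    proof (rule inj_onI)
      fix x y assume "x \<in> Dset n k a j t" "y \<in> Dset n k a j t" "phi k a j x = phi k a j y"
      thus "x = y" using phi_inj[of x n k a j t y] jn by blast
    qed
    show "phi k a j ` Dset n k a j t = Qset k a j"
    proof
      show "phi k a j ` Dset n k a j t \<subseteq> Qset k a j" using phi_in_Q by blast
      show "Qset k a j \<subseteq> phi k a j ` Dset n k a j t"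
      proof
        fix P assume P: "P \<in> Qset k a j"
        interpret S: sctx n k j a t P using assms(2) jn assms(5) P by unfold_locales
        show "P \<in> phi k a j ` Dset n k a j t" using S.sg_D S.phi_sg by (metis imageI)
      qed
    qed
  qed
qed

end
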